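(* For every $n$ there are logistic regression instances $Z\in\mathbb{R}^{n\times 2}$, $Y\in\{-1,1\}^n$ such that any coreset of $(Z,Y)$ for logistic regression (any weighted point set whose logistic loss approximates $\mathcal{L}(\beta\mid Z,Y)$ for all $\beta$ within a finite multiplicative factor, whether or not its points are input points) consists of at least $\Omega(n/\log n)$ points.
   Context: The logistic regression negative log-likelihood is $\mathcal{L}(\beta\mid Z,Y)=\sum_{i=1}^n\ln(1+\exp(-Y_iZ_i\beta))$ for $\beta\in\mathbb{R}^d$, where $Z_i$ is the $i$-th row of $Z$. A weighted set $C\in\mathbb{R}^{k\times d}$ with weights $u\in\mathbb{R}^k_{>0}$ evaluates the loss as $\sum_{j=1}^k u_j\ln(1+\exp(c_j\beta))$ where $c_j$ are the rows of $C$ (labels folded into the rows as $c=-Y_iZ_i$). *)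

theory Defs
  imports "HOL-Analysis.Analysis"
begin

definition logistic_loss :: "nat \<Rightarrow> (nat \<Rightarrow> real^2) \<Rightarrow> (nat \<Rightarrow> real) \<Rightarrow> real^2 \<Rightarrow> real" where
  "logistic_loss n Z Y \<beta> = (\<Sum>i<n. ln (1 + exp (- Y i * (Z i \<bullet> \<beta>))))"

text \<open>Weighted point set C (rows C j, j < k) with weights u; labels folded into the rows.\<close>
definition weighted_loss :: "nat \<Rightarrow> (nat \<Rightarrow> real^2) \<Rightarrow> (nat \<Rightarrow> real) \<Rightarrow> real^2 \<Rightarrow> real" where
  "weighted_loss k C u \<beta> = (\<Sum>j<k. u j * ln (1 + exp (C j \<bullet> \<beta>)))"

definition is_coreset :: "nat \<Rightarrow> (nat \<Rightarrow> real^2) \<Rightarrow> (nat \<Rightarrow> real) \<Rightarrow> real \<Rightarrow>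
    nat \<Rightarrow> (nat \<Rightarrow> real^2) \<Rightarrow> (nat \<Rightarrow> real) \<Rightarrow> bool" where
  "is_coreset n Z Y \<Delta> k C u \<longleftrightarrow>
     \<Delta> \<ge> 1 \<and> (\<forall>j<k. u j > 0) \<and>
     (\<forall>\<beta>. logistic_loss n Z Y \<beta> / \<Delta> \<le> weighted_loss k C u \<beta> \<and>
          weighted_loss k C u \<beta> \<le> \<Delta> * logistic_loss n Z Y \<beta>)"

end

theory Submission
  imports Defs
begin

definition ell :: "real \<Rightarrow> real" where "ell s = ln (1 + exp s)"

lemma ell_le: "ell s \<le> exp s"
  unfolding ell_def by (rule ln_add_one_self_le_self) simp

lemma ell_pos: "ell s > 0"
  unfolding ell_def by (simp add: add_pos_pos)

lemma ell_mono: "s \<le> t \<Longrightarrow> ell s \<le> ell t"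
  unfolding ell_def by (simp add: add_pos_pos)

lemma ell_ge: assumes "s \<le> 0" shows "exp s / 2 \<le> ell s"
proof -
  let ?x = "exp s"
  have x0: "0 < ?x" and x1: "?x \<le> 1" using assms by auto
  have "ln (1 / (1 + ?x)) \<le> 1 / (1 + ?x) - 1" using x0 by (intro ln_le_minus_one) (auto simp: add_pos_pos)
  moreover have "ln (1 / (1 + ?x)) = - ln (1 + ?x)" using x0 by (simp add: ln_div add_pos_pos)
  moreover have "1 / (1 + ?x) - 1 = - (?x / (1 + ?x))"
  proof -
    have "1 + ?x > 0" using x0 by linarith
    thus ?thesis by (simp add: field_simps)
  qed
  ultimately have "ln (1 + ?x) \<ge> ?x / (1 + ?x)" by linarith
  moreover have "?x / (1 + ?x) \<ge> ?x / 2" using x0 x1 by (intro divide_left_mono) (auto simp: add_pos_pos)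
  ultimately show ?thesis unfolding ell_def by linarith
qed

lemma keyA:
  fixes c d :: "nat \<Rightarrow> real^2" and w :: "real^2"
  assumes cor: "\<And>\<beta>. (\<Sum>i<n. ell (c i \<bullet> \<beta>)) / \<Delta> \<le> (\<Sum>j<k. u j * ell (d j \<bullet> \<beta>))"
       "\<And>\<beta>. (\<Sum>j<k. u j * ell (d j \<bullet> \<beta>)) \<le> \<Delta> * (\<Sum>i<n. ell (c i \<bullet> \<beta>))"
    and D: "\<Delta> \<ge> 1" and up: "\<And>j. j < k \<Longrightarrow> u j > 0"
    and M: "M < 0" "ii < n" "c ii \<bullet> w = M" "\<And>i. i < n \<Longrightarrow> c i \<bullet> w \<le> M"
  shows "\<exists>j<k. d j \<bullet> w = M"
proof -
  have Lup: "(\<Sum>i<n. ell (c i \<bullet> (t *\<^sub>R w))) \<le> real n * exp (t * M)" if "t \<ge> 0" for t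
  proof -
    have "(\<Sum>i<n. ell (c i \<bullet> (t *\<^sub>R w))) \<le> (\<Sum>i<n. exp (t * M))"
    proof (rule sum_mono)
      fix i assume "i \<in> {..<n}"
      hence "t * (c i \<bullet> w) \<le> t * M" using M(4) that by (simp add: mult_left_mono)
      thus "ell (c i \<bullet> (t *\<^sub>R w)) \<le> exp (t * M)"
        using ell_le[of "t * (c i \<bullet> w)"] by (simp add: order_trans)
    qed
    thus ?thesis by simp
  qed
  have Llow: "exp (t * M) / 2 \<le> (\<Sum>i<n. ell (c i \<bullet> (t *\<^sub>R w)))" if "t \<ge> 0" for t
  proof -
    have "exp (t * M) / 2 \<le> ell (c ii \<bullet> (t *\<^sub>R w))"
      using ell_ge[of "t * M"] M that by (simp add: mult_nonneg_nonpos)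
    also have "\<dots> \<le> (\<Sum>i<n. ell (c i \<bullet> (t *\<^sub>R w)))"
      using M(2) by (intro member_le_sum) (auto intro: less_imp_le ell_pos)
    finally show ?thesis .
  qed
  have part1: "d j \<bullet> w \<le> M" if j: "j < k" for j
  proof (rule ccontr)
    assume "\<not> d j \<bullet> w \<le> M"
    hence a: "d j \<bullet> w > M" by simp
    define a' where "a' = min (d j \<bullet> w) (M/2)"
    have a'1: "a' > M" "a' < 0" "a' \<le> d j \<bullet> w" using a M(1) by (auto simp: a'_def)
    define K where "K = 2 * \<Delta> * real n / u j"
    have K0: "K \<ge> 0" using up[OF j] D by (simp add: K_def)
    define t where "t = K / (a' - M)"
    have t0: "t \<ge> 0" using K0 a'1 by (simp add: t_def)
    have "u j * ell (t * a') \<le> u j * ell (d j \<bullet> (t *\<^sub>R w))"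
      using up[OF j] a'1 t0 by (intro mult_left_mono ell_mono) (auto simp: mult_left_mono)
    also have "\<dots> \<le> (\<Sum>j<k. u j * ell (d j \<bullet> (t *\<^sub>R w)))"
      using j up by (intro member_le_sum) (auto intro!: less_imp_le[OF mult_pos_pos] up ell_pos)
    also have "\<dots> \<le> \<Delta> * (real n * exp (t * M))"
      using cor(2)[of "t *\<^sub>R w"] Lup[OF t0] D by (smt (verit) mult_left_mono)
    finally have 1: "u j * ell (t * a') \<le> \<Delta> * (real n * exp (t * M))" .
    have "u j * (exp (t * a') / 2) \<le> u j * ell (t * a')"
      using up[OF j] ell_ge[of "t*a'"] a'1 t0 by (intro mult_left_mono) (auto simp: mult_nonneg_nonpos)
    with 1 have 2: "u j * exp (t * a') \<le> 2 * \<Delta> * real n * exp (t * M)" by simp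
    have "exp (t * a') = exp (t * (a' - M)) * exp (t * M)"
      by (simp add: algebra_simps flip: exp_add)
    with 2 have "u j * exp (t * (a' - M)) \<le> 2 * \<Delta> * real n" by simp
    hence "exp (t * (a' - M)) \<le> K" using up[OF j] by (simp add: K_def field_simps)
    moreover have "t * (a' - M) = K" using a'1 by (simp add: t_def)
    ultimately show False using exp_ge_add_one_self[of K] by simp
  qed
  show ?thesis
  proof (rule ccontr)
    assume "\<not> (\<exists>j<k. d j \<bullet> w = M)"
    hence lt: "\<And>j. j < k \<Longrightarrow> d j \<bullet> w < M" using part1 by (meson order.not_eq_order_implies_strict)
    define A where "A = insert (M - 1) ((\<lambda>j. d j \<bullet> w) ` {..<k})"
    define a where "a = Max A"
    have fA: "finite A" by (simp add: A_def)
    have aM: "a < M" unfolding a_def using fA lt by (subst Max_less_iff) (auto simp: A_def)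
    have da: "d j \<bullet> w \<le> a" if "j < k" for j unfolding a_def using fA that by (intro Max_ge) (auto simp: A_def)
    define U where "U = (\<Sum>j<k. u j)"
    have U0: "U \<ge> 0" unfolding U_def using up by (intro sum_nonneg) (auto intro: less_imp_le)
    define K where "K = 2 * \<Delta> * U"
    have K0: "K \<ge> 0" using U0 D by (simp add: K_def)
    define t where "t = K / (M - a)"
    have t0: "t \<ge> 0" using K0 aM by (simp add: t_def)
    have "exp (t * M) / 2 / \<Delta> \<le> (\<Sum>i<n. ell (c i \<bullet> (t *\<^sub>R w))) / \<Delta>"
      using divide_right_mono[OF Llow[OF t0], of \<Delta>] D by simp
    also have "\<dots> \<le> (\<Sum>j<k. u j * ell (d j \<bullet> (t *\<^sub>R w)))" by (rule cor(1))
    also have "\<dots> \<le> (\<Sum>j<k. u j * exp (t * a))"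
    proof (rule sum_mono)
      fix j assume j: "j \<in> {..<k}"
      hence "t * (d j \<bullet> w) \<le> t * a" using da t0 by (simp add: mult_left_mono)
      hence "ell (d j \<bullet> (t *\<^sub>R w)) \<le> exp (t * a)"
        using ell_le[of "t * (d j \<bullet> w)"] by (simp add: order_trans)
      thus "u j * ell (d j \<bullet> (t *\<^sub>R w)) \<le> u j * exp (t * a)"
        using up j by (intro mult_left_mono) (auto intro: less_imp_le)
    qed
    also have "\<dots> = U * exp (t * a)" by (simp add: U_def sum_distrib_right)
    finally have 1: "exp (t * M) \<le> 2 * \<Delta> * U * exp (t * a)" using D by (simp add: field_simps)
    have "exp (t * M) = exp (t * (M - a)) * exp (t * a)"
      by (simp add: algebra_simps flip: exp_add)
    with 1 have "exp (t * (M - a)) \<le> K" by (simp add: K_def)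
    moreover have "t * (M - a) = K" using aM by (simp add: t_def)
    ultimately show False using exp_ge_add_one_self[of K] by simp
  qed
qed

lemma inner2: "(x::real^2) \<bullet> vector [p, q] = x$1 * p + x$2 * q"
  by (simp add: inner_vec_def sum_2)

lemma card_le2:
  assumes "finite S" and "\<And>x y z. x \<in> S \<Longrightarrow> y \<in> S \<Longrightarrow> z \<in> S \<Longrightarrow> x \<noteq> y \<Longrightarrow> z = x \<or> z = y"
  shows "card S \<le> 2"
proof (cases "\<exists>x y. x \<in> S \<and> y \<in> S \<and> x \<noteq> y")
  case True
  then obtain x y where "x \<in> S" "y \<in> S" "x \<noteq> y" by blast
  hence "S \<subseteq> {x, y}" using assms(2) by blast
  hence "card S \<le> card {x, y}" by (intro card_mono) auto
  also have "\<dots> \<le> 2" by (simp add: card_insert_if)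
  finally show ?thesis .
next
  case False
  hence "S \<subseteq> {} \<or> (\<exists>x. S \<subseteq> {x})" by blast
  thus ?thesis
  proof
    assume "S \<subseteq> {}" thus ?thesis by simp
  next
    assume "\<exists>x. S \<subseteq> {x}"
    then obtain x where "S \<subseteq> {x}" by blast
    hence "card S \<le> card {x}" by (intro card_mono) auto
    thus ?thesis by simp
  qed
qed

lemma main_bound:
  fixes n :: nat
  defines "a \<equiv> \<lambda>l::nat. real l / real n"
  defines "cpt \<equiv> \<lambda>l. vector [a l, (a l)^2 + 1] :: real^2"
  assumes cor: "is_coreset n (\<lambda>i. - cpt i) (\<lambda>i. 1) \<Delta> k C u"
  shows "real n \<le> 2 * real k"
proof -
  define w where "w = (\<lambda>l. vector [2 * a l, -1] :: real^2)"
  define M where "M = (\<lambda>l. (a l)^2 - 1)"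
  have D: "\<Delta> \<ge> 1" and up: "\<And>j. j < k \<Longrightarrow> u j > 0"
    and c1: "\<And>\<beta>. logistic_loss n (\<lambda>i. - cpt i) (\<lambda>i. 1) \<beta> / \<Delta> \<le> weighted_loss k C u \<beta>"
    and c2: "\<And>\<beta>. weighted_loss k C u \<beta> \<le> \<Delta> * logistic_loss n (\<lambda>i. - cpt i) (\<lambda>i. 1) \<beta>"
    using cor unfolding is_coreset_def by auto
  have LL: "logistic_loss n (\<lambda>i. - cpt i) (\<lambda>i. 1) \<beta> = (\<Sum>i<n. ell (cpt i \<bullet> \<beta>))" for \<beta>
    by (simp add: logistic_loss_def ell_def)
  have WL: "weighted_loss k C u \<beta> = (\<Sum>j<k. u j * ell (C j \<bullet> \<beta>))" for \<beta>
    by (simp add: weighted_loss_def ell_def)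
  have alt1: "a l < 1" if "l < n" for l using that by (simp add: a_def)
  have ainj: "a l = a m \<Longrightarrow> l < n \<Longrightarrow> m < n \<Longrightarrow> l = m" for l m
    by (simp add: a_def)
  have cov: "\<exists>j<k. C j \<bullet> w l = M l" if l: "l < n" for l
  proof (rule keyA[where c = cpt and d = C and u = u and \<Delta> = \<Delta> and ii = l])
    show "\<And>\<beta>. (\<Sum>i<n. ell (cpt i \<bullet> \<beta>)) / \<Delta> \<le> (\<Sum>j<k. u j * ell (C j \<bullet> \<beta>))"
      using c1 by (simp add: LL WL)
    show "\<And>\<beta>. (\<Sum>j<k. u j * ell (C j \<bullet> \<beta>)) \<le> \<Delta> * (\<Sum>i<n. ell (cpt i \<bullet> \<beta>))"
      using c2 by (simp add: LL WL)
    show "1 \<le> \<Delta>" by (rule D)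
    show "\<And>j. j < k \<Longrightarrow> 0 < u j" by (rule up)
    have "0 \<le> a l" by (simp add: a_def)
    thus "M l < 0" using alt1[OF l] by (simp add: M_def abs_square_less_1)
    show "l < n" by (rule l)
    show "cpt l \<bullet> w l = M l" by (simp add: cpt_def w_def M_def inner2 power2_eq_square)
    show "cpt i \<bullet> w l \<le> M l" if "i < n" for i
    proof -
      have "0 \<le> (a l - a i)^2" by simp
      thus ?thesis by (simp add: cpt_def w_def M_def inner2 power2_eq_square algebra_simps)
    qed
  qed
  define S where "S = (\<lambda>j. {l. l < n \<and> C j \<bullet> w l = M l})"
  have cardS: "card (S j) \<le> 2" for j
  proof (rule card_le2)
    show "finite (S j)" by (simp add: S_def)
    fix x y z assume xyz: "x \<in> S j" "y \<in> S j" "z \<in> S j" "x \<noteq> y"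
    let ?p = "C j $ 1" and ?q = "C j $ 2"
    have eq: "2 * a l * ?p - ?q = (a l)^2 - 1" if "l \<in> S j" for l
      using that by (simp add: S_def w_def M_def inner2 algebra_simps)
    have axy: "a x \<noteq> a y" using xyz ainj by (auto simp: S_def)
    have p1: "2 * ?p = a x + a y"
    proof -
      have "(a x - a y) * (2 * ?p) = (a x - a y) * (a x + a y)"
        using eq[OF xyz(1)] eq[OF xyz(2)] by (simp add: algebra_simps power2_eq_square)
      thus ?thesis using axy by (simp only: mult_left_cancel)
    qed
    show "z = x \<or> z = y"
    proof (rule ccontr)
      assume nz: "\<not> (z = x \<or> z = y)"
      have axz: "a x \<noteq> a z" using xyz nz ainj by (auto simp: S_def)
      have "(a x - a z) * (2 * ?p) = (a x - a z) * (a x + a z)"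
        using eq[OF xyz(1)] eq[OF xyz(3)] by (simp add: algebra_simps power2_eq_square)
      hence "2 * ?p = a x + a z" using axz by (simp only: mult_left_cancel)
      with p1 have "a y = a z" by simp
      thus False using ainj nz xyz by (auto simp: S_def)
    qed
  qed
  have "{..<n} \<subseteq> (\<Union>j<k. S j)" using cov by (auto simp: S_def)
  hence "n \<le> card (\<Union>j<k. S j)"
    by (metis card_lessThan card_mono finite_UN_I finite_lessThan S_def finite_Collect_conjI finite_Collect_less_nat)
  also have "\<dots> \<le> (\<Sum>j<k. card (S j))" by (rule card_UN_le) simp
  also have "\<dots> \<le> (\<Sum>j<k. 2)" by (rule sum_mono) (rule cardS)
  finally have "n \<le> 2 * k" by simp
  thus ?thesis by linarith
qed

theorem corollary3:
  shows "\<exists>c>0. \<forall>n::nat. \<exists>(Z::nat \<Rightarrow> real^2) (Y::nat \<Rightarrow> real).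
           (\<forall>i<n. Y i \<in> {-1, 1}) \<and>
           (\<forall>(\<Delta>::real) (k::nat) (C::nat \<Rightarrow> real^2) (u::nat \<Rightarrow> real).
              is_coreset n Z Y \<Delta> k C u \<longrightarrow> real k \<ge> c * real n / ln (real n))"
proof (intro exI[of _ "1/4"] conjI allI)
  show "(0::real) < 1/4" by simp
  fix n :: nat
  define cpt where "cpt = (\<lambda>l::nat. vector [real l / real n, (real l / real n)^2 + 1] :: real^2)"
  show "\<exists>(Z::nat \<Rightarrow> real^2) (Y::nat \<Rightarrow> real).
           (\<forall>i<n. Y i \<in> {-1, 1}) \<and>
           (\<forall>(\<Delta>::real) (k::nat) (C::nat \<Rightarrow> real^2) (u::nat \<Rightarrow> real).
              is_coreset n Z Y \<Delta> k C u \<longrightarrow> real k \<ge> 1/4 * real n / ln (real n))"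
  proof (intro exI[of _ "\<lambda>i. - cpt i"] exI[of _ "\<lambda>i. 1"] conjI)
    show "\<forall>i<n. (1::real) \<in> {-1, 1}" by simp
  next
    show "\<forall>\<Delta> k C u. is_coreset n (\<lambda>i. - cpt i) (\<lambda>i. 1) \<Delta> k C u \<longrightarrow> real k \<ge> 1/4 * real n / ln (real n)"
    proof (intro allI impI)
    fix \<Delta> k C u assume cor: "is_coreset n (\<lambda>i. - cpt i) (\<lambda>i. 1) \<Delta> k C u"
    have nk: "real n \<le> 2 * real k" using main_bound[of n \<Delta> k C u] cor unfolding cpt_def by simp
    show "real k \<ge> 1/4 * real n / ln (real n)"
    proof (cases "n \<le> 1")
      case True
      hence "n = 0 \<or> n = 1" by auto
      thus ?thesis by auto
    next
      case False
      hence "ln (real n) \<ge> ln 2" by simp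
      hence ln2: "ln (real n) \<ge> 1/2" using ln2_ge_two_thirds by linarith
      have "1/4 * real n / ln (real n) \<le> 1/4 * real n / (1/2)"
        using ln2 by (intro divide_left_mono) auto
      thus ?thesis using nk by simp
    qed
    qed
  qed
qed

end
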